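(* Let $w\doteq\delta^n\tau_1^{u_1}\cdots\tau_t^{u_t}$ be a word in Xu normal form. Then the unique word in Garside normal form conjugate to $w$ is as follows (with $k\in\mathbb{Z}$): - $w\doteq\delta^{3k}$: $\Delta^{2k}$; - $w\doteq\delta^{3k+1}$: $\Delta^{2k}ab$; - $w\doteq\delta^{3k+2}$: $\Delta^{2k}a^3b$; - $w\doteq\delta^{3k}a^{u_1}$: $\Delta^{2k}a^{u_1}$; - $w\doteq\delta^{3k+1}a$: $\Delta^{2k}a^2b$; - $w\doteq\delta^{3k+2}a^{u_1}$: $\Delta^{2k+1}a^{1+u_1}$; - $t\geq 2$ (case (c) of the Xu normal form criterion): $\Delta^{(2n-t)/3}\sigma_1^{1+u_1}\sigma_2^{1+u_2}\cdots\sigma_t^{1+u_t}$.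
   Context: $B_3=\langle a,b\mid aba=bab\rangle$, $x=a^{-1}ba$, $\delta=ba$, $\Delta=aba$. For $i\in\mathbb{Z}$: $\tau_i=a,b,x$ according as $i\equiv1,2,0\pmod 3$; $\sigma_i=a$ if $i$ odd, $\sigma_i=b$ if $i$ even. A word $\delta^n\tau_1^{u_1}\cdots\tau_t^{u_t}$ ($n\in\mathbb{Z}$, $t\ge0$, $u_i\ge1$) is in Xu normal form if $(-n,t,u_1,\dots,u_t)$ is lexicographically minimal among all such words representing braids in the same conjugacy class. A word $\Delta^\ell\sigma_1^{p_1}\cdots\sigma_r^{p_r}$ with $\ell\in\mathbb{Z}$, $r\ge0$, $p_i\ge1$ is in Garside normal form if one of: (A) $\ell$ even and $r\in\{0,1\}$; (B) $\ell$ even, $r=2$, $p_1\in\{1,2,3\}$, $p_2=1$; (C)/(D) $r\ge1$, all $p_i\ge2$, $\ell\equiv r\pmod 2$, and $(p_1,\dots,p_r)$ lexicographically minimal among its cyclic permutations. Every conjugacy class of $B_3$ contains a unique word in Garside normal form. *)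

theory Defs
  imports Main "HOL-Library.List_Lexorder" "HOL-Library.Product_Lexorder"
begin

datatype gen = GA | GB

text \<open>A letter is a generator with a sign: True = positive, False = inverse.\<close>
type_synonym bword = "(gen \<times> bool) list"

definition inv_word :: "bword \<Rightarrow> bword" where
  "inv_word w = rev (map (\<lambda>(g, s). (g, \<not> s)) w)"

inductive braid_step :: "bword \<Rightarrow> bword \<Rightarrow> bool" where
  cancel: "braid_step (u @ [(g, s), (g, \<not> s)] @ v) (u @ v)"
| rel: "braid_step (u @ [(GA, True), (GB, True), (GA, True)] @ v)
                   (u @ [(GB, True), (GA, True), (GB, True)] @ v)"

definition braid_eq :: "bword \<Rightarrow> bword \<Rightarrow> bool" where
  "braid_eq = equivclp braid_step"

definition braid_conj :: "bword \<Rightarrow> bword \<Rightarrow> bool" where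
  "braid_conj v w \<longleftrightarrow> (\<exists>g. braid_eq (g @ v @ inv_word g) w)"

definition wa :: bword where "wa = [(GA, True)]"
definition wb :: bword where "wb = [(GB, True)]"
definition wx :: bword where "wx = inv_word wa @ wb @ wa"
definition wdelta :: bword where "wdelta = wb @ wa"
definition wDelta :: bword where "wDelta = wa @ wb @ wa"

definition npow :: "bword \<Rightarrow> nat \<Rightarrow> bword" where
  "npow w k = concat (replicate k w)"

definition zpow :: "bword \<Rightarrow> int \<Rightarrow> bword" where
  "zpow w n = (if 0 \<le> n then npow w (nat n) else npow (inv_word w) (nat (- n)))"

definition tau :: "nat \<Rightarrow> bword" where
  "tau i = (if i mod 3 = 1 then wa else if i mod 3 = 2 then wb else wx)"

definition sigma :: "nat \<Rightarrow> bword" where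
  "sigma i = (if odd i then wa else wb)"

definition xu_word :: "int \<Rightarrow> nat list \<Rightarrow> bword" where
  "xu_word n us = zpow wdelta n @ concat (map (\<lambda>(i, u). npow (tau i) u) (enumerate 1 us))"

definition garside_word :: "int \<Rightarrow> nat list \<Rightarrow> bword" where
  "garside_word l ps = zpow wDelta l @ concat (map (\<lambda>(i, p). npow (sigma i) p) (enumerate 1 ps))"

definition xu_nf :: "int \<Rightarrow> nat list \<Rightarrow> bool" where
  "xu_nf n us \<longleftrightarrow> (\<forall>u\<in>set us. 1 \<le> u) \<and>
     (\<forall>n' us'. (\<forall>u\<in>set us'. 1 \<le> u) \<and> braid_conj (xu_word n us) (xu_word n' us')
        \<longrightarrow> (- n, length us, us) \<le> (- n', length us', us'))"

definition garside_nf :: "int \<Rightarrow> nat list \<Rightarrow> bool" where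
  "garside_nf l ps \<longleftrightarrow> (\<forall>p\<in>set ps. 1 \<le> p) \<and>
     ((even l \<and> length ps \<le> 1)
    \<or> (even l \<and> length ps = 2 \<and> ps ! 0 \<in> {1, 2, 3} \<and> ps ! 1 = 1)
    \<or> (1 \<le> length ps \<and> (\<forall>p\<in>set ps. 2 \<le> p) \<and> l mod 2 = int (length ps) mod 2
        \<and> (\<forall>i<length ps. ps \<le> rotate i ps)))"

definition is_garside_rep :: "bword \<Rightarrow> int \<Rightarrow> nat list \<Rightarrow> bool" where
  "is_garside_rep w l ps \<longleftrightarrow> garside_nf l ps \<and> braid_conj w (garside_word l ps)"

end

theory Submission
  imports Defs
begin



lemma step_ctx: "braid_step u v \<Longrightarrow> braid_step (p @ u @ q) (p @ v @ q)"
proof (induction rule: braid_step.induct)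
  case (cancel u g s v)
  show ?case using braid_step.cancel[of "p @ u" g s "v @ q"] by simp
next
  case (rel u v)
  show ?case using braid_step.rel[of "p @ u" "v @ q"] by simp
qed

lemma eq_ctx: "braid_eq u v \<Longrightarrow> braid_eq (p @ u @ q) (p @ v @ q)"
  unfolding braid_eq_def
proof (induction rule: equivclp_induct)
  case base then show ?case by (simp add: equivclp_def)
next
  case (step y z)
  then have "braid_step (p@y@q) (p@z@q) \<or> braid_step (p@z@q) (p@y@q)" using step_ctx by blast
  then have "equivclp braid_step (p@y@q) (p@z@q)"
    by (metis conversepI equivclp_conversep r_into_rtranclp rtranlcp_le_equivclp predicate2D)
  then show ?case using step(3) by (meson equivclp_OO_equivclp_le_equivclp relcomppI predicate2D)
qed

lemma equivp_braid_eq: "equivp braid_eq" unfolding braid_eq_def by simp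

lemma braid_eq_app: "braid_eq u u' \<Longrightarrow> braid_eq v v' \<Longrightarrow> braid_eq (u @ v) (u' @ v')"
proof -
  assume "braid_eq u u'" "braid_eq v v'"
  then have "braid_eq ([] @ u @ v) ([] @ u' @ v)" "braid_eq (u' @ v @ []) (u' @ v' @ [])" using eq_ctx by blast+
  then show ?thesis using equivp_braid_eq by (simp add: equivp_def)
qed

quotient_type bgrp = bword / braid_eq
  by (rule equivp_braid_eq)

instantiation bgrp :: monoid_mult
begin
lift_definition one_bgrp :: bgrp is "[]" .
lift_definition times_bgrp :: "bgrp \<Rightarrow> bgrp \<Rightarrow> bgrp" is "(@)" by (rule braid_eq_app)
instance by standard (transfer, simp add: equivp_reflp[OF equivp_braid_eq])+
end


abbreviation B :: "bword \<Rightarrow> bgrp" where "B \<equiv> abs_bgrp"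

lemma B_app: "B (u @ v) = B u * B v" by (simp add: times_bgrp.abs_eq)
lemma B_Nil: "B [] = 1" by (simp add: one_bgrp.abs_eq)
lemma B_eq: "B u = B v \<longleftrightarrow> braid_eq u v" by (simp add: bgrp.abs_eq_iff)
lemma B_step: "braid_step u v \<Longrightarrow> B u = B v"
  unfolding B_eq braid_eq_def equivclp_def by (rule r_into_rtranclp) simp

lemma B_surj: "\<exists>w. x = B w"
  by (metis Quotient3_abs_rep Quotient3_bgrp)

lemma B_cancel: "B [(g,s),(g, \<not>s)] = 1"
  using B_step[OF braid_step.cancel[of "[]" g s "[]"]] by (simp add: B_Nil)

lemma inv_word_Cons: "inv_word (x # w) = inv_word w @ [(fst x, \<not> snd x)]"
  by (cases x) (simp add: inv_word_def)
lemma inv_word_Nil: "inv_word [] = []" by (simp add: inv_word_def)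
lemma inv_word_app: "inv_word (u @ v) = inv_word v @ inv_word u"
  by (simp add: inv_word_def)

lemma B_inv_l: "B (inv_word w) * B w = 1"
proof (induction w)
  case Nil then show ?case by (simp add: inv_word_Nil B_Nil)
next
  case (Cons x w)
  obtain g s where x: "x = (g,s)" by fastforce
  have "B [(g, \<not>s), (g, s)] = 1" using B_cancel[of g "\<not>s"] by simp
  have "inv_word (x#w) @ (x#w) = inv_word w @ [(g, \<not>s), (g, s)] @ w"
    by (simp add: inv_word_Cons x)
  then have "B (inv_word (x#w)) * B (x#w) = B (inv_word w) * (B [(g, \<not>s), (g, s)] * B w)"
    by (metis B_app)
  then show ?case using Cons by (simp add: \<open>B [(g, \<not>s), (g, s)] = 1\<close>)
qed

lemma B_inv_r: "B w * B (inv_word w) = 1"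
proof (induction w rule: rev_induct)
  case Nil then show ?case by (simp add: inv_word_Nil B_Nil)
next
  case (snoc x w)
  obtain g s where x: "x = (g,s)" by fastforce
  have "B (w @ [x]) * B (inv_word (w @ [x])) = B w * (B [(g, s), (g, \<not>s)] * B (inv_word w))"
    by (simp add: inv_word_app x B_app[symmetric] inv_word_def)
  then show ?case using snoc by (simp add: B_cancel)
qed

instantiation bgrp :: inverse
begin
definition inverse_bgrp :: "bgrp \<Rightarrow> bgrp" where "inverse_bgrp x = B (inv_word (rep_bgrp x))"
definition divide_bgrp :: "bgrp \<Rightarrow> bgrp \<Rightarrow> bgrp" where "divide_bgrp x y = x * inverse y"
instance ..
end

lemma B_inv: "inverse (B w) = B (inv_word w)"
proof -
  let ?v = "rep_bgrp (B w)"
  have "B ?v = B w" by (metis Quotient3_abs_rep Quotient3_bgrp)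
  have "B (inv_word ?v) = B (inv_word ?v) * (B w * B (inv_word w))" by (simp add: B_inv_r)
  also have "\<dots> = (B (inv_word ?v) * B ?v) * B (inv_word w)" by (simp add: \<open>B ?v = B w\<close> mult.assoc)
  also have "\<dots> = B (inv_word w)" by (simp add: B_inv_l)
  finally show ?thesis by (simp add: inverse_bgrp_def)
qed

lemma inv_l [simp]: "inverse x * x = (1::bgrp)"
  by (metis B_surj B_inv B_inv_l)
lemma inv_r [simp]: "x * inverse x = (1::bgrp)"
  by (metis B_surj B_inv B_inv_r)
lemma inv_l2 [simp]: "inverse x * (x * y) = (y::bgrp)"
  by (metis inv_l mult.assoc mult_1_left)
lemma inv_r2 [simp]: "x * (inverse x * y) = (y::bgrp)"
  by (metis inv_r mult.assoc mult_1_left)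
lemma inv_inv [simp]: "inverse (inverse x) = (x::bgrp)"
  by (metis inv_l inv_r2 mult_1_right)
lemma inv_mult: "inverse (x * y) = inverse y * (inverse (x::bgrp))"
  by (metis inv_l inv_l2 inv_r mult.assoc mult_1_right)
lemma inv_one [simp]: "inverse (1::bgrp) = 1"
  by (metis inv_r mult_1_left)
lemma mult_left_cancel: "(z * x = z * y) \<longleftrightarrow> (x = (y::bgrp))"
  by (metis inv_l2)
lemma mult_right_cancel: "(x * z = y * z) \<longleftrightarrow> (x = (y::bgrp))"
  by (metis inv_r mult.assoc mult_1_right)
lemma inv_pow: "inverse ((x::bgrp) ^ n) = (inverse x) ^ (n::nat)"
  by (induction n) (simp_all add: inv_mult power_commutes inv_one)

definition cj :: "bgrp \<Rightarrow> bgrp \<Rightarrow> bool" where "cj x y \<longleftrightarrow> (\<exists>h. h * x * inverse h = y)"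

lemma cj_refl: "cj x x" unfolding cj_def by (rule exI[of _ 1]) simp
lemma cj_sym: "cj x y \<Longrightarrow> cj y x" unfolding cj_def
  by (metis inv_inv inv_l2 inv_r mult.assoc mult_1_right)
lemma cj_trans: "cj x y \<Longrightarrow> cj y z \<Longrightarrow> cj x z" unfolding cj_def
  by (metis inv_mult mult.assoc)
lemma cj_swap: "cj (x * y) (y * x)" unfolding cj_def
  by (rule exI[of _ y]) (simp add: mult.assoc)
lemma cj_by: "h * x * inverse h = y \<Longrightarrow> cj x y" unfolding cj_def by blast

lemma braid_conj_cj: "braid_conj v w \<longleftrightarrow> cj (B v) (B w)"
  unfolding braid_conj_def cj_def B_eq[symmetric] B_app B_inv[symmetric]
  by (metis B_surj mult.assoc)

definition zp :: "bgrp \<Rightarrow> int \<Rightarrow> bgrp" where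
  "zp x n = (if 0 \<le> n then x ^ nat n else inverse x ^ nat (- n))"

lemma zp_nat: "zp x (int k) = x ^ k" by (simp add: zp_def)
lemma zp_0 [simp]: "zp x 0 = 1" by (simp add: zp_def)
lemma zp_1 [simp]: "zp x 1 = x" by (simp add: zp_def)

lemma zp_succ: "zp x (n + 1) = zp x n * x"
proof (cases "0 \<le> n")
  case True
  then have "nat (n+1) = Suc (nat n)" by simp
  then show ?thesis using True by (simp add: zp_def power_commutes)
next
  case False
  define m where "m = nat (- (n+1))"
  then have m: "nat (- n) = Suc m" using False by simp
  have "inverse x ^ Suc m * x = inverse x ^ m" by (simp only: power_Suc2 mult.assoc inv_l mult_1_right)
  moreover have "zp x (n+1) = inverse x ^ m" using False m_def by (simp add: zp_def)
  ultimately show ?thesis using False m by (simp add: zp_def)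
qed

lemma zp_pred: "zp x (n - 1) = zp x n * inverse x"
  using zp_succ[of x "n - 1"] by (metis diff_add_cancel inv_r mult.assoc mult_1_right)

lemma zp_add: "zp x (m + n) = zp x m * zp x n"
proof (induction n rule: int_induct[where k=0])
  case base then show ?case by simp
next
  case (step1 i)
  have "zp x (m + (i+1)) = zp x ((m + i) + 1)" by (simp add: add.assoc)
  then show ?case by (simp add: zp_succ step1 mult.assoc)
next
  case (step2 i)
  have "zp x (m + (i-1)) = zp x ((m + i) - 1)" by (metis add_diff_eq)
  then show ?case by (simp add: zp_pred step2 mult.assoc)
qed

lemma zp_mult: "zp x (int c * k) = zp (x ^ c) k"
proof (induction k rule: int_induct[where k=0])
  case base then show ?case by simp
next
  case (step1 i)
  have "int c * (i + 1) = int c * i + int c" by (simp add: algebra_simps)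
  then show ?case by (simp add: zp_add zp_succ step1 zp_nat)
next
  case (step2 i)
  have "int c * (i - 1) = int c * i + - int c" by (simp add: algebra_simps)
  moreover have "zp x (- int c) = inverse (x ^ c)" by (simp add: zp_def inv_pow)
  ultimately have "zp x (int c * (i - 1)) = zp x (int c * i) * inverse (x ^ c)"
    by (metis zp_add)
  then show ?case by (simp add: step2 zp_pred)
qed

lemma zp_comm: "zp x m * zp x n = zp x n * zp x m"
  by (metis add.commute zp_add)

lemma zp_comm1: "zp x m * x = x * zp x m"
  using zp_comm[of x m 1] by (simp add: zp_def)

definition central :: "bgrp \<Rightarrow> bool" where "central z \<longleftrightarrow> (\<forall>y. z * y = y * z)"

lemma central_inv: "central z \<Longrightarrow> central (inverse z)"
  unfolding central_def by (metis inv_l2 inv_r mult.assoc mult_1_right)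
lemma central_mult: "central z \<Longrightarrow> central w \<Longrightarrow> central (z * w)"
  unfolding central_def by (metis mult.assoc)
lemma central_pow: "central z \<Longrightarrow> central (z ^ k)"
proof (induction k)
  case 0 then show ?case by (simp add: central_def)
next
  case (Suc k) then show ?case using central_mult[of z "z ^ k"] by simp
qed
lemma central_zp: "central z \<Longrightarrow> central (zp z k)"
  by (simp add: zp_def central_pow central_inv)
lemma cj_central: "central z \<Longrightarrow> cj x y \<Longrightarrow> cj (z * x) (z * y)"
proof -
  assume c: "central z" and "cj x y"
  then obtain h where h: "h * x * inverse h = y" unfolding cj_def by blast
  have "h * (z * x) * inverse h = z * (h * x * inverse h)"
    using c unfolding central_def by (metis mult.assoc)
  then show ?thesis using h unfolding cj_def by blast
qed

definition a :: bgrp where "a = B wa"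
definition b :: bgrp where "b = B wb"
definition D :: bgrp where "D = b * a"
definition DD :: bgrp where "DD = a * b * a"

lemma braid: "a * b * a = b * a * b"
  using B_step[OF braid_step.rel[of "[]" "[]"]] by (simp add: a_def b_def B_app[symmetric] wa_def wb_def)
lemma braid': "a * (b * (a * z)) = b * (a * (b * z))"
  using braid by (metis mult.assoc)

lemma B_wx: "B wx = inverse a * b * a"
  by (simp add: wx_def B_app B_inv a_def b_def mult.assoc)
lemma B_wdelta: "B wdelta = D" by (simp add: wdelta_def B_app D_def a_def b_def)
lemma B_wDelta: "B wDelta = DD" by (simp add: wDelta_def B_app DD_def a_def b_def mult.assoc)

lemma B_npow: "B (npow w k) = B w ^ k"
  by (induction k) (simp_all add: npow_def B_Nil B_app)
lemma B_zpow: "B (zpow w n) = zp (B w) n"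
  by (simp add: zpow_def zp_def B_npow B_inv)

lemma DD_a: "DD * a = b * DD" unfolding DD_def by (simp add: mult.assoc braid')
lemma DD_b: "DD * b = a * DD" unfolding DD_def by (metis braid mult.assoc)
lemma DD2_central: "central (DD * DD)"
  unfolding central_def
proof
  fix y
  obtain w where "y = B w" using B_surj by blast
  have "DD * DD * B w = B w * (DD * DD)"
  proof (induction w)
    case Nil then show ?case by (simp add: B_Nil)
  next
    case (Cons x w)
    have ga: "DD * DD * a = a * (DD * DD)" by (metis DD_a DD_b mult.assoc)
    have gb: "DD * DD * b = b * (DD * DD)" by (metis DD_a DD_b mult.assoc)
    have ga': "DD * DD * inverse a = inverse a * (DD * DD)"
      by (metis ga inv_l2 inv_r mult.assoc mult_1_right)
    have gb': "DD * DD * inverse b = inverse b * (DD * DD)"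
      by (metis gb inv_l2 inv_r mult.assoc mult_1_right)
    obtain g s where x: "x = (g, s)" by fastforce
    have "B [x] \<in> {a, b, inverse a, inverse b}"
      by (cases g; cases s) (simp_all add: x a_def b_def wa_def wb_def B_inv inv_word_def)
    then have "DD * DD * B [x] = B [x] * (DD * DD)" using ga gb ga' gb' by auto
    moreover have "B (x # w) = B [x] * B w" by (metis B_app append_Cons append_Nil)
    ultimately show ?case using Cons by (metis mult.assoc)
  qed
  then show "DD * DD * y = y * (DD * DD)" using \<open>y = B w\<close> by simp
qed

lemma D3: "D ^ 3 = DD * DD"
proof -
  have "D ^ 3 = b * (a * b * a) * b * a" by (simp add: D_def numeral_3_eq_3 mult.assoc)
  also have "\<dots> = b * (DD * b) * a" by (simp add: DD_def mult.assoc)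
  also have "\<dots> = b * a * (DD * a)" by (simp add: DD_b mult.assoc)
  also have "\<dots> = (b * a * b) * DD" by (simp add: DD_a mult.assoc)
  also have "\<dots> = DD * DD" by (simp add: DD_def braid)
  finally show ?thesis .
qed

lemma D3_central: "central (D ^ 3)" using D3 DD2_central by simp




definition T :: "nat \<Rightarrow> bgrp" where "T i = B (tau i)"
definition S :: "nat \<Rightarrow> bgrp" where "S i = B (sigma i)"

lemma T_mod: "T (i mod 3) = T i" by (simp add: T_def tau_def)
lemma T1: "i mod 3 = 1 \<Longrightarrow> T i = a" by (simp add: T_def tau_def a_def)
lemma T2: "i mod 3 = 2 \<Longrightarrow> T i = b" by (simp add: T_def tau_def b_def)
lemma T0: "i mod 3 = 0 \<Longrightarrow> T i = inverse a * b * a" by (simp add: T_def tau_def B_wx)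

lemma T_D: "T i * D = D * T (Suc i)"
proof -
  have "i mod 3 = 0 \<or> i mod 3 = 1 \<or> i mod 3 = 2" by arith
  moreover
  { assume h: "i mod 3 = 0" then have "Suc i mod 3 = 1" by (simp add: mod_Suc)
    then have ?thesis using h by (simp add: T0 T1 D_def mult.assoc braid'[symmetric]) }
  moreover
  { assume h: "i mod 3 = 1" then have "Suc i mod 3 = 2" by (simp add: mod_Suc)
    then have ?thesis using h by (simp add: T1 T2 D_def mult.assoc) (metis braid mult.assoc) }
  moreover
  { assume h: "i mod 3 = 2" then have "Suc i mod 3 = 0" by (simp add: mod_Suc)
    then have ?thesis using h by (simp add: T0 T2 D_def mult.assoc) }
  ultimately show ?thesis by meson
qed

lemma T_pair: "T (Suc i) * T i = D"
proof -
  have "i mod 3 = 0 \<or> i mod 3 = 1 \<or> i mod 3 = 2" by arith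
  moreover
  { assume h: "i mod 3 = 0" then have "Suc i mod 3 = 1" by (simp add: mod_Suc)
    then have ?thesis using h by (simp add: T0 T1 D_def mult.assoc) }
  moreover
  { assume h: "i mod 3 = 1" then have "Suc i mod 3 = 2" by (simp add: mod_Suc)
    then have ?thesis using h by (simp add: T1 T2 D_def mult.assoc) }
  moreover
  { assume h: "i mod 3 = 2" then have "Suc i mod 3 = 0" by (simp add: mod_Suc)
    then have "T (Suc i) * T i = inverse a * (b * a * b)" using h by (simp add: T0 T2 mult.assoc)
    also have "\<dots> = D" by (simp only: braid[symmetric]) (simp add: D_def mult.assoc)
    finally have ?thesis . }
  ultimately show ?thesis by meson
qed

lemma S_DD: "S i * DD = DD * S (Suc i)"
  by (simp add: S_def sigma_def DD_a DD_b a_def[symmetric] b_def[symmetric])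

lemma conj_pow: "(inverse h * x * h) ^ k = inverse h * x ^ k * (h::bgrp)"
  by (induction k) (simp_all add: mult.assoc)

lemma T_shift: "T (Suc i) = inverse D * T i * D"
  by (simp add: T_D mult.assoc)
lemma S_shift: "S (Suc i) = inverse DD * S i * DD"
  by (simp add: S_DD mult.assoc)

definition X :: "nat \<Rightarrow> nat list \<Rightarrow> bgrp" where
  "X j us = B (concat (map (\<lambda>(i, u). npow (tau i) u) (enumerate j us)))"
definition G :: "nat \<Rightarrow> nat list \<Rightarrow> bgrp" where
  "G j us = B (concat (map (\<lambda>(i, u). npow (sigma i) u) (enumerate j us)))"

lemma X_Nil [simp]: "X j [] = 1" by (simp add: X_def B_Nil)
lemma X_Cons: "X j (u # us) = T j ^ u * X (Suc j) us"
  by (simp add: X_def B_app B_npow T_def)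
lemma G_Nil [simp]: "G j [] = 1" by (simp add: G_def B_Nil)
lemma G_Cons: "G j (u # us) = S j ^ u * G (Suc j) us"
  by (simp add: G_def B_app B_npow S_def)

lemma xu_val: "B (xu_word n us) = zp D n * X 1 us"
  by (simp add: xu_word_def X_def B_app B_zpow B_wdelta)
lemma gar_val: "B (garside_word l ps) = zp DD l * G 1 ps"
  by (simp add: garside_word_def G_def B_app B_zpow B_wDelta)

lemma X_shift: "X (Suc j) us = inverse D * X j us * D"
proof (induction us arbitrary: j)
  case Nil then show ?case by simp
next
  case (Cons u us)
  have "T (Suc j) ^ u = inverse D * T j ^ u * D" by (simp only: T_shift conj_pow)
  then show ?case by (simp add: X_Cons Cons mult.assoc)
qed

lemma G_shift: "G (Suc j) us = inverse DD * G j us * DD"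
proof (induction us arbitrary: j)
  case Nil then show ?case by simp
next
  case (Cons u us)
  have "S (Suc j) ^ u = inverse DD * S j ^ u * DD" by (simp only: S_shift conj_pow)
  then show ?case by (simp add: G_Cons Cons mult.assoc)
qed

lemma X_D: "X j us * D = D * X (Suc j) us"
  by (simp add: X_shift mult.assoc)

lemma X_Dpow: "X j us * D ^ k = D ^ k * X (j + k) us"
proof (induction k arbitrary: j)
  case 0 then show ?case by simp
next
  case (Suc k)
  have "X j us * D ^ Suc k = X j us * D * D ^ k" by (simp add: mult.assoc)
  also have "\<dots> = D * (X (Suc j) us * D ^ k)" by (simp add: X_D mult.assoc)
  also have "\<dots> = D ^ Suc k * X (j + Suc k) us" by (simp add: Suc mult.assoc)
  finally show ?case .
qed

lemma X_mod: "X (j mod 3) us = X j us"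
proof (induction us arbitrary: j)
  case Nil then show ?case by simp
next
  case (Cons u us)
  have "X (Suc (j mod 3)) us = X (Suc j mod 3) us"
    by (metis Cons mod_Suc_eq)
  then show ?case by (simp add: X_Cons T_mod Cons)
qed

lemma X_zp: "X j us * zp D n = zp D n * X (j + nat (n mod 3)) us"
proof -
  have n: "n = int 3 * (n div 3) + int (nat (n mod 3))" by simp
  have zs: "zp D n = zp (D ^ 3) (n div 3) * D ^ nat (n mod 3)"
    by (subst n, simp only: zp_add zp_mult zp_nat)
  have c: "central (zp (D ^ 3) (n div 3))" using D3_central central_zp by blast
  show ?thesis using c unfolding zs central_def by (metis X_Dpow mult.assoc)
qed

lemma X_app: "X j (xs @ [v]) = X j xs * T (j + length xs) ^ v"
  by (induction xs arbitrary: j) (simp_all add: X_Cons mult.assoc)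

lemma cj_X_suc: "cj (zp D m * X j us) (zp D m * X (Suc j) us)"
proof (rule cj_by[of "inverse D"])
  have "inverse D * zp D m = zp D m * inverse D"
    by (metis inv_l2 inv_r mult.assoc mult_1_right zp_comm1)
  then show "inverse D * (zp D m * X j us) * inverse (inverse D) = zp D m * X (Suc j) us"
    by (simp add: X_shift) (metis mult.assoc)
qed

lemma cj_X_0: "cj (zp D m * X 0 us) (zp D m * X j us)"
  by (induction j) (auto intro: cj_refl cj_trans cj_X_suc)

lemma cj_X: "cj (zp D m * X j us) (zp D m * X j' us)"
  by (meson cj_X_0 cj_sym cj_trans)





definition L :: "nat list \<Rightarrow> bgrp" where "L cs = B (concat (map tau cs))"
definition lett :: "nat \<Rightarrow> nat list \<Rightarrow> nat list" where
  "lett j us = concat (map (\<lambda>(i, u). replicate u i) (enumerate j us))"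

lemma L_Nil [simp]: "L [] = 1" by (simp add: L_def B_Nil)
lemma L_Cons: "L (c # cs) = T c * L cs" by (simp add: L_def T_def B_app)
lemma L_app: "L (xs @ ys) = L xs * L ys" by (simp add: L_def B_app)
lemma L_rep: "L (replicate u c) = T c ^ u" by (induction u) (simp_all add: L_Cons)

lemma X_lett: "X j us = L (lett j us)"
  by (induction us arbitrary: j) (simp_all add: X_Cons lett_def L_app L_rep)

lemma lett_app: "lett j (xs @ [v]) = lett j xs @ replicate v (j + length xs)"
  by (simp add: lett_def enumerate_append_eq)

lemma L_D: "L p * D = D * L (map Suc p)"
proof (induction p)
  case (Cons x p)
  then show ?case by (simp add: L_Cons) (metis T_D mult.assoc)
qed simp

fun normal :: "nat list \<Rightarrow> bool" where
  "normal (c # c' # r) = ((c' mod 3 = c mod 3 \<or> c' mod 3 = Suc c mod 3) \<and> normal (c' # r))"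
| "normal _ = True"

lemma small3: "(x::nat) < 3 \<Longrightarrow> x = 0 \<or> x = 1 \<or> x = 2" by auto
lemma bad_aux: "\<not> (c' mod 3 = c mod 3 \<or> c' mod 3 = Suc c mod 3) \<Longrightarrow> Suc c' mod 3 = (c::nat) mod 3"
proof -
  assume h: "\<not> (c' mod 3 = c mod 3 \<or> c' mod 3 = Suc c mod 3)"
  have e1: "Suc c' mod 3 = Suc (c' mod 3) mod 3" "Suc c mod 3 = Suc (c mod 3) mod 3" by (simp_all add: mod_Suc_eq)
  have "c mod 3 = 0 \<or> c mod 3 = 1 \<or> c mod 3 = 2" "c' mod 3 = 0 \<or> c' mod 3 = 1 \<or> c' mod 3 = 2" using small3[of "c mod 3"] small3[of "c' mod 3"] by simp_all
  then show ?thesis using h e1 by auto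
qed

lemma bad_split: "\<not> normal cs \<Longrightarrow> \<exists>p c c' s. cs = p @ [c, c'] @ s \<and> Suc c' mod 3 = c mod 3"
proof (induction cs rule: normal.induct)
  case (1 c c' r)
  show ?case
  proof (cases "c' mod 3 = c mod 3 \<or> c' mod 3 = Suc c mod 3")
    case True
    then have "\<not> normal (c' # r)" using 1(2) by simp
    then obtain p d d' s where h: "c' # r = p @ [d, d'] @ s" "Suc d' mod 3 = d mod 3" using 1(1) True by blast
    have e: "c # c' # r = (c # p) @ [d, d'] @ s" using h(1) by simp
    show ?thesis by (intro exI conjI, rule e, rule h(2))
  next
    case False
    then have m: "Suc c' mod 3 = c mod 3" by (rule bad_aux)
    have e: "c # c' # r = [] @ [c, c'] @ r" by simp
    show ?thesis by (intro exI conjI, rule e, rule m)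
  qed
qed simp_all

lemma L_bad: "Suc c' mod 3 = c mod 3 \<Longrightarrow> L (p @ [c, c'] @ s) = D * L (map Suc p @ s)"
proof -
  assume h: "Suc c' mod 3 = c mod 3"
  have "T c = T (Suc c')" by (metis T_mod h)
  then have "T c * (T c' * L s) = D * L s" by (metis T_pair mult.assoc)
  then have "L (p @ [c, c'] @ s) = L p * D * L s" by (simp add: L_app L_Cons mult.assoc)
  then show ?thesis by (simp add: L_D L_app mult.assoc)
qed

lemma normalize: "\<exists>k cs'. L cs = D ^ k * L cs' \<and> normal cs'"
proof (induction "length cs" arbitrary: cs rule: less_induct)
  case less
  show ?case
  proof (cases "normal cs")
    case True then show ?thesis by (rule_tac x=0 in exI) auto
  next
    case False
    then obtain p c c' s where cs: "cs = p @ [c, c'] @ s" and h: "Suc c' mod 3 = c mod 3"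
      using bad_split by blast
    have "length (map Suc p @ s) < length cs" using cs by simp
    then obtain k cs' where "L (map Suc p @ s) = D ^ k * L cs'" "normal cs'" using less by blast
    then show ?thesis using L_bad[OF h, of p s] cs
      by (rule_tac x="Suc k" in exI) (auto simp: mult.assoc)
  qed
qed

lemma runs: "normal cs \<Longrightarrow> cs \<noteq> [] \<Longrightarrow> hd cs mod 3 = j mod 3 \<Longrightarrow>
   \<exists>us'. us' \<noteq> [] \<and> (\<forall>u\<in>set us'. 1 \<le> u) \<and> L cs = X j us'"
proof (induction cs arbitrary: j rule: normal.induct)
  case (1 c c' r)
  have n: "normal (c' # r)" and st: "c' mod 3 = c mod 3 \<or> c' mod 3 = Suc c mod 3" using 1(2) by auto
  have Tc: "T c = T j" using 1(4) by (metis T_mod list.sel(1))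
  show ?case
  proof (cases "c' mod 3 = c mod 3")
    case True
    then obtain us'' where u: "us'' \<noteq> []" "\<forall>u\<in>set us''. 1 \<le> u" "L (c' # r) = X j us''"
      using 1(1)[OF n _ ] 1(4) by auto
    then obtain u w where uw: "us'' = u # w" by (cases us'') auto
    show ?thesis
      by (rule exI[of _ "Suc u # w"]) (use u uw Tc in \<open>simp add: L_Cons X_Cons mult.assoc\<close>)
  next
    case False
    have "Suc c mod 3 = Suc j mod 3" using 1(4) by (metis list.sel(1) mod_Suc_eq)
    then have "c' mod 3 = Suc j mod 3" using st False by simp
    then obtain us'' where u: "us'' \<noteq> []" "\<forall>u\<in>set us''. 1 \<le> u" "L (c' # r) = X (Suc j) us''"
      using 1(1)[OF n, of "Suc j"] by auto
    show ?thesis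
      by (rule exI[of _ "1 # us''"]) (use u Tc in \<open>simp add: L_Cons X_Cons\<close>)
  qed
next
  case ("2_2" c)
  have "T c = T j" using "2_2"(3) by (metis T_mod list.sel(1))
  then show ?case by (rule_tac x="[1]" in exI) (simp add: L_Cons X_Cons)
qed simp

lemma reduce: "\<exists>m' us'. m \<le> m' \<and> (\<forall>u\<in>set us'. 1 \<le> u) \<and> cj (zp D m * L cs) (B (xu_word m' us'))"
proof -
  obtain k cs' where k: "L cs = D ^ k * L cs'" "normal cs'" using normalize by blast
  have e: "zp D m * L cs = zp D (m + int k) * L cs'" by (simp add: k zp_add zp_nat mult.assoc)
  show ?thesis
  proof (cases "cs' = []")
    case True
    then show ?thesis using e by (rule_tac x="m + int k" in exI, rule_tac x="[]" in exI) (simp add: xu_val cj_refl)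
  next
    case False
    then obtain us' where u: "\<forall>u\<in>set us'. 1 \<le> u" "L cs' = X (hd cs') us'" using runs k(2) by blast
    have "cj (zp D m * L cs) (zp D (m + int k) * X 1 us')" using e u(2) cj_X by simp
    then show ?thesis using u(1) by (rule_tac x="m + int k" in exI, rule_tac x="us'" in exI) (simp add: xu_val)
  qed
qed





fun Y :: "nat list \<Rightarrow> bgrp" where
  "Y [] = 1"
| "Y [u] = a ^ u"
| "Y (u # v # us) = a ^ u * inverse D * Y (v # us)"

lemma T_1: "T 1 = a" by (simp add: T1)
lemma S_1: "S 1 = a" by (simp add: S_def sigma_def a_def)
lemma T_1': "T (Suc 0) = a" by (simp add: T1)
lemma S_1': "S (Suc 0) = a" by (simp add: S_def sigma_def a_def)
lemma S_2: "S 2 = b" by (simp add: S_def sigma_def b_def)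
lemma DD_aD: "DD = a * D" by (simp add: DD_def D_def mult.assoc)
lemma DDa: "DD * a = D * D"
  by (simp add: DD_def D_def mult.assoc) (metis braid mult.assoc)

lemma X1_Cons: "X 1 (u # rest) = a ^ u * (inverse D * X 1 rest * D)"
  using X_Cons[of 1 u rest] X_shift[of 1 rest] T_1 by simp
lemma G1_Cons: "G 1 (u # rest) = a ^ u * (inverse DD * G 1 rest * DD)"
  using G_Cons[of 1 u rest] G_shift[of 1 rest] S_1 by simp

lemma X1_Y: "us \<noteq> [] \<Longrightarrow> X 1 us = Y us * D ^ (length us - 1)"
proof (induction us rule: Y.induct)
  case (2 u) then show ?case by (simp add: X_Cons T_1')
next
  case (3 u v us)
  have "X 1 (u # v # us) = a ^ u * (inverse D * X 1 (v # us) * D)"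
    by (rule X1_Cons)
  also have "\<dots> = Y (u # v # us) * D ^ (length (u # v # us) - 1)"
    using 3 by (simp add: mult.assoc power_commutes)
  finally show ?case .
qed simp

lemma G1_Y: "us \<noteq> [] \<Longrightarrow> G 1 (map Suc us) = a * Y us * DD ^ (length us - 1)"
proof (induction us rule: Y.induct)
  case (2 u) then show ?case by (simp add: G_Cons S_1')
next
  case (3 u v us)
  have "G 1 (map Suc (u # v # us)) = a ^ Suc u * (inverse DD * G 1 (map Suc (v # us)) * DD)"
    by (simp only: list.map G1_Cons)
  also have "\<dots> = a * a ^ u * (inverse DD * a) * Y (v # us) * DD ^ (length us) * DD"
    using 3 by (simp add: mult.assoc)
  also have "inverse DD * a = inverse D" by (simp add: DD_aD inv_mult mult.assoc)
  finally show ?case by (simp add: mult.assoc power_commutes)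
qed simp

lemma big_conj:
  assumes ne: "us \<noteq> []" and l: "3 * l = 2 * n - int (length us)"
  shows "cj (zp D n * X 1 us) (zp DD l * G 1 (map Suc us))"
proof -
  define s where "s = length us - 1"
  have ts: "int (length us) = int s + 1" using ne s_def by (cases us) auto
  have c1: "cj (zp D n * X 1 us) (zp D (n + int s) * Y us)"
  proof -
    have "cj ((zp D n * Y us) * D ^ s) (D ^ s * (zp D n * Y us))" by (rule cj_swap)
    moreover have "D ^ s * (zp D n * Y us) = zp D (n + int s) * Y us"
      by (simp add: zp_add zp_nat mult.assoc) (metis zp_comm zp_nat mult.assoc)
    ultimately show ?thesis using X1_Y[OF ne] s_def by (simp add: mult.assoc)
  qed
  have c2: "cj (zp DD l * G 1 (map Suc us)) (zp DD (l + int s) * (a * Y us))"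
  proof -
    have "cj ((zp DD l * (a * Y us)) * DD ^ s) (DD ^ s * (zp DD l * (a * Y us)))" by (rule cj_swap)
    moreover have "DD ^ s * (zp DD l * (a * Y us)) = zp DD (l + int s) * (a * Y us)"
      by (simp add: zp_add zp_nat mult.assoc) (metis zp_comm zp_nat mult.assoc)
    ultimately show ?thesis using G1_Y[OF ne] s_def by (simp add: mult.assoc)
  qed
  have "odd (l + int s)" using l ts by presburger
  then obtain j where j: "l + int s = 2 * j + 1" by (metis oddE)
  have j2: "n + int s = 3 * j + 2" using j l ts by linarith
  have "zp DD (l + int s) * (a * Y us) = zp (DD ^ 2) j * (DD * a) * Y us"
    by (simp only: j zp_add zp_mult[of DD 2, simplified] zp_1 mult.assoc)
  also have "\<dots> = zp (D ^ 3) j * D ^ 2 * Y us" by (simp add: DDa D3 power2_eq_square)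
  also have "\<dots> = zp D (n + int s) * Y us"
    by (simp only: j2 zp_add zp_mult[of D 3, simplified] zp_nat[of D 2, simplified])
  finally show ?thesis using c1 c2 by (metis cj_sym cj_trans)
qed


lemma mod_aux: "(c + nat (n mod 3) + k) mod 3 = nat ((int c + n + int k) mod 3)"
proof -
  have "int ((c + nat (n mod 3) + k) mod 3) = (int c + n mod 3 + int k) mod 3" by (simp add: zmod_int)
  also have "\<dots> = ((int c + int k) + n mod 3) mod 3" by (simp add: algebra_simps)
  also have "\<dots> = ((int c + int k) + n) mod 3" by (rule mod_add_right_eq)
  also have "\<dots> = (int c + n + int k) mod 3" by (simp add: algebra_simps)
  finally show ?thesis by (metis nat_int)
qed

lemma rot_base: "cj (zp D n * X 1 (u1 # rest)) (zp D n * (X (2 + nat (n mod 3)) rest * a ^ u1))"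
proof -
  have "X 1 (u1 # rest) = a ^ u1 * X 2 rest"
    using X_Cons[of 1 u1 rest] T_1 by (simp add: numeral_2_eq_2)
  then have "cj (zp D n * X 1 (u1 # rest)) (X 2 rest * (zp D n * a ^ u1))"
    using cj_swap[of "zp D n * a ^ u1" "X 2 rest"] by (simp add: mult.assoc)
  also have "X 2 rest * (zp D n * a ^ u1) = zp D n * (X (2 + nat (n mod 3)) rest * a ^ u1)"
    by (metis X_zp mult.assoc)
  finally show ?thesis .
qed




lemma rot1:
  assumes "us \<noteq> []" "(n + int (length us)) mod 3 = 0"
  shows "cj (B (xu_word n us)) (B (xu_word n (rotate1 us)))"
proof -
  obtain u1 rest where us: "us = u1 # rest" using assms(1) by (cases us) auto
  let ?j = "2 + nat (n mod 3)"
  have "(int 2 + n + int (length rest)) mod 3 = 1" using assms(2) us by simp presburger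
  then have "(?j + length rest) mod 3 = 1" using mod_aux[of 2 n "length rest"] by simp
  then have "T (?j + length rest) = a" by (rule T1)
  then have "X ?j rest * a ^ u1 = X ?j (rest @ [u1])" by (simp add: X_app)
  then have c1: "cj (B (xu_word n us)) (zp D n * X ?j (rest @ [u1]))"
    using rot_base[of n u1 rest] us by (simp add: xu_val mult.assoc)
  have e2: "B (xu_word n (rotate1 us)) = zp D n * X 1 (rest @ [u1])" by (simp add: xu_val us)
  show ?thesis unfolding e2 using c1 cj_X[of n ?j "rest @ [u1]" 1] by (rule cj_trans)
qed

lemma rot_all:
  assumes "us \<noteq> []" "(n + int (length us)) mod 3 = 0"
  shows "cj (B (xu_word n us)) (B (xu_word n (rotate i us)))"
proof (induction i)
  case 0 then show ?case by (simp add: cj_refl)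
next
  case (Suc i)
  have "rotate i us \<noteq> []" "(n + int (length (rotate i us))) mod 3 = 0" using assms by auto
  then have "cj (B (xu_word n (rotate i us))) (B (xu_word n (rotate1 (rotate i us))))" by (rule rot1)
  then have "cj (B (xu_word n us)) (B (xu_word n (rotate1 (rotate i us))))" by (rule cj_trans[OF Suc])
  then show ?case by (simp only: rotate_Suc)
qed

lemma xu_nf_le:
  assumes "xu_nf n us" "\<forall>u\<in>set us'. 1 \<le> u" "cj (B (xu_word n us)) (B (xu_word n' us'))"
  shows "(- n, length us, us) \<le> (- n', length us', us')"
proof -
  have "\<forall>n' us'. (\<forall>u\<in>set us'. 1 \<le> u) \<and> braid_conj (xu_word n us) (xu_word n' us')
        \<longrightarrow> (- n, length us, us) \<le> (- n', length us', us')"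
    using assms(1) unfolding xu_nf_def by (rule conjunct2)
  then show ?thesis using assms(2,3) unfolding braid_conj_cj by blast
qed

lemma mod3_case:
  assumes nf: "xu_nf n us" and t: "2 \<le> length us"
  shows "(n + int (length us)) mod 3 = 0"
proof -
  have pos: "\<forall>u\<in>set us. 1 \<le> u" using nf by (simp add: xu_nf_def)
  obtain u1 rest where us: "us = u1 # rest" using t by (cases us) auto
  have "rest \<noteq> []" using t us by auto
  then obtain xs v where rest: "rest = xs @ [v]" by (metis rev_exhaust)
  have u1: "1 \<le> u1" and v: "1 \<le> v" using pos us rest by auto
  let ?j = "2 + nat (n mod 3)"
  let ?c = "?j + length xs"
  have W: "cj (B (xu_word n us)) (zp D n * (X ?j xs * T ?c ^ v * a ^ u1))"
    using rot_base[of n u1 rest] rest us by (simp add: xu_val X_app)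
  have len: "length us = length xs + 2" using us rest by simp
  have not1: "(n + int (length us)) mod 3 \<noteq> 1"
  proof
    assume r: "(n + int (length us)) mod 3 = 1"
    have "(int 2 + n + int (length xs)) mod 3 = 1" using r len by simp presburger
    then have "?c mod 3 = 1" using mod_aux[of 2 n "length xs"] by simp
    then have "T ?c = a" by (rule T1)
    then have "X ?j xs * T ?c ^ v * a ^ u1 = X ?j (xs @ [v + u1])" by (simp add: X_app power_add mult.assoc)
    then have "cj (B (xu_word n us)) (zp D n * X ?j (xs @ [v + u1]))" using W by simp
    then have "cj (B (xu_word n us)) (B (xu_word n (xs @ [v + u1])))"
      unfolding xu_val using cj_X[of n ?j "xs @ [v + u1]" 1] by (rule cj_trans)
    moreover have "\<forall>u\<in>set (xs @ [v + u1]). 1 \<le> u" using pos us rest by auto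
    ultimately have "(- n, length us, us) \<le> (- n, length (xs @ [v + u1]), xs @ [v + u1])"
      using xu_nf_le[OF nf] by blast
    then show False using len by simp
  qed
  have not2: "(n + int (length us)) mod 3 \<noteq> 2"
  proof
    assume r: "(n + int (length us)) mod 3 = 2"
    have "(int 2 + n + int (length xs)) mod 3 = 2" using r len by simp presburger
    then have "?c mod 3 = 2" using mod_aux[of 2 n "length xs"] by simp
    define p where "p = lett ?j xs @ replicate (v - 1) ?c"
    define s where "s = replicate (u1 - 1) (1::nat)"
    have "X ?j xs * T ?c ^ v * a ^ u1 = L (p @ [?c, 1] @ s)"
    proof -
      have "replicate v ?c = replicate (v - 1) ?c @ [?c]" using v
        by (metis Suc_diff_1 less_le_trans less_numeral_extra(1) replicate_Suc replicate_append_same)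
      moreover have "replicate u1 (1::nat) = 1 # s" using u1 s_def by (cases u1) auto
      ultimately have "lett ?j xs @ replicate v ?c @ replicate u1 1 = p @ [?c, 1] @ s"
        by (simp add: p_def)
      then have "L (lett ?j xs @ replicate v ?c @ replicate u1 1) = L (p @ [?c, 1] @ s)" by simp
      then show ?thesis by (simp add: L_app L_rep X_lett T_1 T_1' mult.assoc)
    qed
    also have "\<dots> = D * L (map Suc p @ s)"
      by (rule L_bad) (use \<open>?c mod 3 = 2\<close> in simp)
    finally have "zp D n * (X ?j xs * T ?c ^ v * a ^ u1) = zp D (n + 1) * L (map Suc p @ s)"
      by (simp add: zp_succ mult.assoc)
    moreover obtain m' us' where "n + 1 \<le> m'" "\<forall>u\<in>set us'. 1 \<le> u"
      "cj (zp D (n + 1) * L (map Suc p @ s)) (B (xu_word m' us'))"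
      using reduce by blast
    ultimately have "cj (B (xu_word n us)) (zp D (n + 1) * L (map Suc p @ s))"
         "cj (zp D (n + 1) * L (map Suc p @ s)) (B (xu_word m' us'))" using W by simp_all
    then have "cj (B (xu_word n us)) (B (xu_word m' us'))" by (rule cj_trans)
    then have "(- n, length us, us) \<le> (- m', length us', us')"
      using xu_nf_le[OF nf] \<open>\<forall>u\<in>set us'. 1 \<le> u\<close> by blast
    then show False using \<open>n + 1 \<le> m'\<close> by simp
  qed
  show ?thesis using not1 not2 by presburger
qed

lemma map_Suc_le: "(xs :: nat list) \<le> ys \<Longrightarrow> map Suc xs \<le> map Suc ys"
proof (induction xs arbitrary: ys)
  case Nil then show ?case by simp
next
  case (Cons x xs)
  then show ?case by (cases ys) auto
qed


lemma invDD_a: "inverse DD * a = b * inverse DD"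
  by (metis DD_b inv_l2 inv_r mult.assoc mult_1_right)
lemma invDD_b: "inverse DD * b = a * inverse DD"
  by (metis DD_a inv_l2 inv_r mult.assoc mult_1_right)

lemma invDD_a': "inverse DD * (a * z) = b * (inverse DD * z)"
  by (metis invDD_a mult.assoc)
lemma invDD_b': "inverse DD * (b * z) = a * (inverse DD * z)"
  by (metis invDD_b mult.assoc)

lemma DD_cj: "cj (D * D) (a ^ 3 * b)"
proof -
  have "D * D = (b * b * a) * b" by (simp add: D_def mult.assoc) (metis braid mult.assoc)
  then have c1: "cj (D * D) (b * (b * b * a))" using cj_swap by simp
  have "inverse DD * (b * (b * b * a)) * inverse (inverse DD) = a ^ 3 * b"
    by (simp add: mult.assoc invDD_a invDD_b invDD_a' invDD_b' numeral_3_eq_3)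
  then have "cj (b * (b * b * a)) (a ^ 3 * b)" by (rule cj_by)
  then show ?thesis using c1 cj_trans by blast
qed

lemma S_2': "S (Suc (Suc 0)) = b" by (simp add: S_def sigma_def b_def)
lemma G_two: "G 1 [p, q] = a ^ p * b ^ q"
  by (simp add: G_Cons S_1' S_2')
lemma G_one: "G 1 [p] = a ^ p" by (simp add: G_Cons S_1')
lemma G_two': "G (Suc 0) [p, q] = a ^ p * b ^ q"
  by (simp add: G_Cons S_1' S_2')
lemma G_one': "G (Suc 0) [p] = a ^ p" by (simp add: G_Cons S_1')
lemma X_one': "X (Suc 0) [p] = a ^ p" by (simp add: X_Cons T_1')
lemma X_one: "X 1 [p] = a ^ p" by (simp add: X_Cons T_1')

lemma zD3k: "zp D (3 * k) = zp (DD * DD) k"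
  using zp_mult[of D 3 k] D3 by simp
lemma zDD2k: "zp DD (2 * k) = zp (DD * DD) k"
  using zp_mult[of DD 2 k] by (simp add: power2_eq_square)
lemma Zc: "central (zp (DD * DD) k)" by (rule central_zp[OF DD2_central])

theorem lemma2p7:
  fixes n :: int and us :: "nat list"
  assumes "xu_nf n us"
  shows "(\<forall>k. us = [] \<and> n = 3 * k \<longrightarrow> is_garside_rep (xu_word n us) (2 * k) [])
       \<and> (\<forall>k. us = [] \<and> n = 3 * k + 1 \<longrightarrow> is_garside_rep (xu_word n us) (2 * k) [1, 1])
       \<and> (\<forall>k. us = [] \<and> n = 3 * k + 2 \<longrightarrow> is_garside_rep (xu_word n us) (2 * k) [3, 1])
       \<and> (\<forall>k u. us = [u] \<and> n = 3 * k \<longrightarrow> is_garside_rep (xu_word n us) (2 * k) [u])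
       \<and> (\<forall>k. us = [1] \<and> n = 3 * k + 1 \<longrightarrow> is_garside_rep (xu_word n us) (2 * k) [2, 1])
       \<and> (\<forall>k u. us = [u] \<and> n = 3 * k + 2 \<longrightarrow> is_garside_rep (xu_word n us) (2 * k + 1) [1 + u])
       \<and> (2 \<le> length us \<longrightarrow>
            3 dvd (2 * n - int (length us)) \<and>
            is_garside_rep (xu_word n us) ((2 * n - int (length us)) div 3) (map (\<lambda>u. 1 + u) us))"
proof -
  have pos: "\<forall>u\<in>set us. 1 \<le> u" using assms by (simp add: xu_nf_def)
  have z1: "zp D (3 * k + 1) = zp (DD * DD) k * D" for k by (simp add: zp_succ zD3k)
  have z2: "zp D (3 * k + 2) = zp (DD * DD) k * (D * D)" for k
  proof -
    have "zp D (3 * k + 2) = zp D (3 * k + 1 + 1)" by (simp add: add.assoc)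
    then show ?thesis by (simp only: zp_succ z1 zD3k mult.assoc)
  qed
  have zo: "zp DD (2 * k + 1) = zp (DD * DD) k * DD" for k by (simp add: zp_succ zDD2k)
  have P1: "\<forall>k. us = [] \<and> n = 3 * k \<longrightarrow> is_garside_rep (xu_word n us) (2 * k) []"
    by (auto simp: is_garside_rep_def garside_nf_def braid_conj_cj xu_val gar_val zD3k zDD2k cj_refl)
  have P2: "\<forall>k. us = [] \<and> n = 3 * k + 1 \<longrightarrow> is_garside_rep (xu_word n us) (2 * k) [1, 1]"
  proof (intro allI impI)
    fix k assume h: "us = [] \<and> n = 3 * k + 1"
    have "cj (zp (DD * DD) k * D) (zp (DD * DD) k * (a * b))"
      unfolding D_def by (rule cj_central[OF Zc cj_swap])
    then show "is_garside_rep (xu_word n us) (2 * k) [1, 1]" using h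
      by (simp add: is_garside_rep_def garside_nf_def braid_conj_cj xu_val gar_val z1 zDD2k G_two G_two')
  qed
  have P3: "\<forall>k. us = [] \<and> n = 3 * k + 2 \<longrightarrow> is_garside_rep (xu_word n us) (2 * k) [3, 1]"
  proof (intro allI impI)
    fix k assume h: "us = [] \<and> n = 3 * k + 2"
    have "cj (zp (DD * DD) k * (D * D)) (zp (DD * DD) k * (a ^ 3 * b))"
      by (rule cj_central[OF Zc DD_cj])
    then show "is_garside_rep (xu_word n us) (2 * k) [3, 1]" using h
      by (simp add: is_garside_rep_def garside_nf_def braid_conj_cj xu_val gar_val z2 zDD2k G_two G_two')
  qed
  have P4: "\<forall>k u. us = [u] \<and> n = 3 * k \<longrightarrow> is_garside_rep (xu_word n us) (2 * k) [u]"
  proof (intro allI impI)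
    fix k u assume h: "us = [u] \<and> n = 3 * k"
    then show "is_garside_rep (xu_word n us) (2 * k) [u]" using pos
      by (simp add: is_garside_rep_def garside_nf_def braid_conj_cj xu_val gar_val zD3k zDD2k G_one X_one G_one' X_one' cj_refl)
  qed
  have P5: "\<forall>k. us = [1] \<and> n = 3 * k + 1 \<longrightarrow> is_garside_rep (xu_word n us) (2 * k) [2, 1]"
  proof (intro allI impI)
    fix k assume h: "us = [1] \<and> n = 3 * k + 1"
    have "cj (b * (a * a)) ((a * a) * b)" by (rule cj_swap)
    then have "cj (zp (DD * DD) k * (D * a)) (zp (DD * DD) k * (a ^ 2 * b))"
      by (simp add: cj_central[OF Zc] mult.assoc power2_eq_square D_def)
    then show "is_garside_rep (xu_word n us) (2 * k) [2, 1]" using h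
      by (simp add: is_garside_rep_def garside_nf_def braid_conj_cj xu_val gar_val z1 zDD2k G_two X_one G_two' X_one' mult.assoc)
  qed
  have P6: "\<forall>k u. us = [u] \<and> n = 3 * k + 2 \<longrightarrow> is_garside_rep (xu_word n us) (2 * k + 1) [1 + u]"
  proof (intro allI impI)
    fix k u assume h: "us = [u] \<and> n = 3 * k + 2"
    have e: "zp D n * X 1 us = zp DD (2 * k + 1) * G 1 [1 + u]"
      using h by (simp add: z2 zo G_one X_one G_one' X_one' mult.assoc DDa[symmetric])
    have "garside_nf (2 * k + 1) [1 + u]" using h pos
      by (simp add: garside_nf_def)
    then show "is_garside_rep (xu_word n us) (2 * k + 1) [1 + u]"
      unfolding is_garside_rep_def braid_conj_cj xu_val gar_val e using cj_refl by blast
  qed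
  have P7: "2 \<le> length us \<longrightarrow>
            3 dvd (2 * n - int (length us)) \<and>
            is_garside_rep (xu_word n us) ((2 * n - int (length us)) div 3) (map (\<lambda>u. 1 + u) us)"
  proof
    assume t: "2 \<le> length us"
    have m: "(n + int (length us)) mod 3 = 0" by (rule mod3_case[OF assms t])
    then have d: "3 dvd (2 * n - int (length us))" by presburger
    define l where "l = (2 * n - int (length us)) div 3"
    have l3: "3 * l = 2 * n - int (length us)" using d l_def by simp
    have ne: "us \<noteq> []" using t by auto
    have ms: "map (\<lambda>u. 1 + u) us = map Suc us" by simp
    have c: "cj (zp D n * X 1 us) (zp DD l * G 1 (map Suc us))" by (rule big_conj[OF ne l3])
    have rot: "map Suc us \<le> rotate i (map Suc us)" for i
    proof -
      have "cj (B (xu_word n us)) (B (xu_word n (rotate i us)))" by (rule rot_all[OF ne m])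
      moreover have "\<forall>u\<in>set (rotate i us). 1 \<le> u" using pos by simp
      ultimately have "(- n, length us, us) \<le> (- n, length (rotate i us), rotate i us)"
        using xu_nf_le[OF assms] by blast
      then have "us \<le> rotate i us" by simp
      then show ?thesis by (simp add: rotate_map map_Suc_le)
    qed
    have par: "l mod 2 = int (length (map Suc us)) mod 2" using l3 by simp presburger
    have g1: "\<forall>p\<in>set (map Suc us). 1 \<le> p" by simp
    have g2: "1 \<le> length (map Suc us)" using ne by (simp add: Suc_leI)
    have g3: "\<forall>p\<in>set (map Suc us). 2 \<le> p" using pos by auto
    have g4: "\<forall>i<length (map Suc us). map Suc us \<le> rotate i (map Suc us)" using rot by blast
    have "garside_nf l (map Suc us)"
      unfolding garside_nf_def using g1 g2 g3 g4 par by blast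
    then show "3 dvd (2 * n - int (length us)) \<and>
            is_garside_rep (xu_word n us) ((2 * n - int (length us)) div 3) (map (\<lambda>u. 1 + u) us)"
      using d c by (simp add: ms l_def[symmetric] is_garside_rep_def braid_conj_cj xu_val gar_val)
  qed
  show ?thesis using P1 P2 P3 P4 P5 P6 P7 by blast
qed


end
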